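(* Let $u:\mathbb{Z}^2\to\mathbb{C}$ be the centers of a square-grid circle pattern with all face variables nonzero. Let $X=X^{(b)}(u)$ and $X'=X^{(w)}(M_b(u))$. Then $$X'_{m,n}=\begin{cases}X_{m,n}^{-1}&(m,n)\text{ black},\\ X_{m,n}\dfrac{(1+X_{m,n+1})(1+X_{m,n-1})}{(1+X_{m+1,n}^{-1})(1+X_{m-1,n}^{-1})}&(m,n)\text{ white}.\end{cases}$$ In particular $X>0$ everywhere if and only if $X'>0$ everywhere. The same statement holds for the white mutation with the roles of black and white (and of $X^{(b)},X^{(w)}$) exchanged.
   Context: Faces of the square grid are indexed by $(m,n)\in\mathbb{Z}^2$; face $(m,n)$ is black if $m+n$ is even, white otherwise; a circle pattern assigns to each face a circle with center $u_{m,n}$ such that the four corners of each face lie on its circle. Conventions: for $u=u_{m,n}$, $X^{(b)}_{m,n}=-\frac{(u_{m+1,n}-u)(u_{m-1,n}-u)}{(u_{m,n+1}-u)(u_{m,n-1}-u)}$ if $(m,n)$ is black and $X^{(b)}_{m,n}=-\frac{(u_{m,n+1}-u)(u_{m,n-1}-u)}{(u_{m+1,n}-u)(u_{m-1,n}-u)}$ if $(m,n)$ is white; $X^{(w)}=1/X^{(b)}$. The central move at face $(m,n)$ replaces $u_{m,n}$ by the root $\tilde u\neq u_{m,n}$ of $\frac{(u_{m+1,n}-z)(u_{m-1,n}-z)}{(u_{m,n+1}-z)(u_{m,n-1}-z)}=\frac{(u_{m+1,n}-u_{m,n})(u_{m-1,n}-u_{m,n})}{(u_{m,n+1}-u_{m,n})(u_{m,n-1}-u_{m,n})}$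 (double root: $\tilde u=u_{m,n}$). The black mutation $M_b$ applies the central move simultaneously to all black faces (white centers unchanged); the white mutation $M_w$ likewise for white faces. Miquel dynamics alternates $M_b$ and $M_w$. *)

theory Defs
  imports "HOL-Analysis.Analysis" "HOL-Library.Complex_Order"
begin

definition black_face :: "int \<Rightarrow> int \<Rightarrow> bool" where
  "black_face m n \<longleftrightarrow> even (m + n)"

text \<open>Vertices of the grid are also indexed by int x int; face (m,n) has corners
  (m,n), (m+1,n), (m,n+1), (m+1,n+1).\<close>

definition circle_pattern :: "(int \<Rightarrow> int \<Rightarrow> complex) \<Rightarrow> bool" where
  "circle_pattern u \<longleftrightarrow> (\<exists>p :: int \<Rightarrow> int \<Rightarrow> complex. \<forall>m n.
      cmod (p (m+1) n - u m n) = cmod (p m n - u m n) \<and>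
      cmod (p m (n+1) - u m n) = cmod (p m n - u m n) \<and>
      cmod (p (m+1) (n+1) - u m n) = cmod (p m n - u m n))"

definition Xb :: "(int \<Rightarrow> int \<Rightarrow> complex) \<Rightarrow> int \<Rightarrow> int \<Rightarrow> complex" where
  "Xb u m n =
     (if black_face m n then
        - ((u (m+1) n - u m n) * (u (m-1) n - u m n)) / ((u m (n+1) - u m n) * (u m (n-1) - u m n))
      else
        - ((u m (n+1) - u m n) * (u m (n-1) - u m n)) / ((u (m+1) n - u m n) * (u (m-1) n - u m n)))"

definition Xw :: "(int \<Rightarrow> int \<Rightarrow> complex) \<Rightarrow> int \<Rightarrow> int \<Rightarrow> complex" where
  "Xw u m n = 1 / Xb u m n"

definition move_ratio :: "(int \<Rightarrow> int \<Rightarrow> complex) \<Rightarrow> int \<Rightarrow> int \<Rightarrow> complex \<Rightarrow> complex" where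
  "move_ratio u m n z =
     ((u (m+1) n - z) * (u (m-1) n - z)) / ((u m (n+1) - z) * (u m (n-1) - z))"

text \<open>Central move at face (m,n): w is the root of
  move_ratio u m n z = move_ratio u m n (u m n) other than u m n, where, clearing denominators,
  the equation is the quadratic
  (a-z)(b-z)(d-u)(e-u) - (a-u)(b-u)(d-z)(e-z) = 0; "the other root" means this quadratic
  is genuinely of degree 2 and factors as k(z - u)(z - w) (w = u exactly for a double root).\<close>

definition central_move :: "(int \<Rightarrow> int \<Rightarrow> complex) \<Rightarrow> int \<Rightarrow> int \<Rightarrow> complex \<Rightarrow> bool" where
  "central_move u m n w \<longleftrightarrow>
     move_ratio u m n w = move_ratio u m n (u m n) \<and>
     (\<exists>k. k \<noteq> 0 \<and> (\<forall>z.
        (u (m+1) n - z) * (u (m-1) n - z) * ((u m (n+1) - u m n) * (u m (n-1) - u m n))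
        - ((u (m+1) n - u m n) * (u (m-1) n - u m n)) * ((u m (n+1) - z) * (u m (n-1) - z))
        = k * (z - u m n) * (z - w)))"

definition black_mutation :: "(int \<Rightarrow> int \<Rightarrow> complex) \<Rightarrow> (int \<Rightarrow> int \<Rightarrow> complex) \<Rightarrow> bool" where
  "black_mutation u v \<longleftrightarrow>
     (\<forall>m n. black_face m n \<longrightarrow> central_move u m n (v m n)) \<and>
     (\<forall>m n. \<not> black_face m n \<longrightarrow> v m n = u m n)"

definition white_mutation :: "(int \<Rightarrow> int \<Rightarrow> complex) \<Rightarrow> (int \<Rightarrow> int \<Rightarrow> complex) \<Rightarrow> bool" where
  "white_mutation u v \<longleftrightarrow>
     (\<forall>m n. \<not> black_face m n \<longrightarrow> central_move u m n (v m n)) \<and>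
     (\<forall>m n. black_face m n \<longrightarrow> v m n = u m n)"

end

theory Submission
  imports Defs
begin

lemma cpos_iff: "0 < (z::complex) \<longleftrightarrow> (\<exists>r>0. z = complex_of_real r)"
  by (auto simp: less_complex_def complex_eq_iff)
lemma cpos_mult: "0 < (a::complex) \<Longrightarrow> 0 < b \<Longrightarrow> 0 < a*b"
  by (auto simp: cpos_iff) (metis mult_pos_pos of_real_mult)
lemma cpos_inv: "0 < (a::complex) \<Longrightarrow> 0 < inverse a"
  by (auto simp: cpos_iff) (metis inverse_positive_iff_positive of_real_inverse)
lemma cpos_div: "0 < (a::complex) \<Longrightarrow> 0 < b \<Longrightarrow> 0 < a/b"
  by (simp add: divide_inverse cpos_mult cpos_inv)
lemma cpos_add1: "0 < (a::complex) \<Longrightarrow> 0 < 1 + a"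
  by (auto simp: cpos_iff) (metis add_pos_pos of_real_1 of_real_add zero_less_one)

lemma alg2:
  fixes P Q R S x1 x2 x3 x4 k1 k2 k3 k4 N1 N2 D3 D4 :: complex
  assumes "P\<noteq>0" "Q\<noteq>0" "R\<noteq>0" "S\<noteq>0" "x1\<noteq>0" "x2\<noteq>0" "x3\<noteq>0" "x4\<noteq>0"
    "k1\<noteq>0" "k2\<noteq>0" "k3\<noteq>0" "k4\<noteq>0" "N1\<noteq>0" "N2\<noteq>0" "D3\<noteq>0" "D4\<noteq>0"
  shows "-((-N1*P*Q/(k1*x1))*(-N2*R*S/(k2*x2)))/((P*R*D3/(k3*x3))*(Q*S*D4/(k4*x4)))
     = -((-x3)*(-x4))/((-x1)*(-x2)) * (k3/D3) * (k4/D4) / (((-k1)/N1) * ((-k2)/N2))"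
  using assms by (simp add: field_simps)

lemma alg:
  fixes c u1 u2 u3 u4 w1 w2 w3 w4 p q r s N1 N2 N3 N4 D1 D2 D3 D4 :: complex
  assumes E1: "-N1*(p-c)*(q-c) = (D1-N1)*(c-u1)*(c-w1)"
      and E2: "-N2*(r-c)*(s-c) = (D2-N2)*(c-u2)*(c-w2)"
      and E3: "(p-c)*(r-c)*D3 = (D3-N3)*(c-u3)*(c-w3)"
      and E4: "(q-c)*(s-c)*D4 = (D4-N4)*(c-u4)*(c-w4)"
      and nz: "N1\<noteq>0" "N2\<noteq>0" "N3\<noteq>0" "N4\<noteq>0" "D1\<noteq>0" "D2\<noteq>0" "D3\<noteq>0" "D4\<noteq>0"
        "D1-N1\<noteq>0" "D2-N2\<noteq>0" "D3-N3\<noteq>0" "D4-N4\<noteq>0"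
        "c-u1\<noteq>0" "c-u2\<noteq>0" "c-u3\<noteq>0" "c-u4\<noteq>0"
        "c-w1\<noteq>0" "c-w2\<noteq>0" "c-w3\<noteq>0" "c-w4\<noteq>0"
  shows "-((w1-c)*(w2-c))/((w3-c)*(w4-c)) = inverse(-((u1-c)*(u2-c))/((u3-c)*(u4-c))) * (1 + -N3/D3) * (1 + -N4/D4) / ((1 + inverse(-N1/D1)) * (1 + inverse(-N2/D2)))"
proof -
  have pq: "p-c\<noteq>0" "q-c\<noteq>0" using E1 nz by auto
  have rs: "r-c\<noteq>0" "s-c\<noteq>0" using E2 nz by auto
  have w1: "c - w1 = -N1*(p-c)*(q-c)/((D1-N1)*(c-u1))"
  proof -
    have "(c-w1)*((D1-N1)*(c-u1)) = -N1*(p-c)*(q-c)" using E1 by (simp add: algebra_simps)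
    moreover have "((D1-N1)*(c-u1)) \<noteq> 0" using nz by simp
    ultimately show ?thesis by (metis nonzero_mult_div_cancel_right)
  qed
  have w2: "c - w2 = -N2*(r-c)*(s-c)/((D2-N2)*(c-u2))"
  proof -
    have "(c-w2)*((D2-N2)*(c-u2)) = -N2*(r-c)*(s-c)" using E2 by (simp add: algebra_simps)
    moreover have "((D2-N2)*(c-u2)) \<noteq> 0" using nz by simp
    ultimately show ?thesis by (metis nonzero_mult_div_cancel_right)
  qed
  have w3: "c - w3 = (p-c)*(r-c)*D3/((D3-N3)*(c-u3))"
  proof -
    have "(c-w3)*((D3-N3)*(c-u3)) = (p-c)*(r-c)*D3" using E3 by (simp add: algebra_simps)
    moreover have "((D3-N3)*(c-u3)) \<noteq> 0" using nz by simp
    ultimately show ?thesis by (metis nonzero_mult_div_cancel_right)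
  qed
  have w4: "c - w4 = (q-c)*(s-c)*D4/((D4-N4)*(c-u4))"
  proof -
    have "(c-w4)*((D4-N4)*(c-u4)) = (q-c)*(s-c)*D4" using E4 by (simp add: algebra_simps)
    moreover have "((D4-N4)*(c-u4)) \<noteq> 0" using nz by simp
    ultimately show ?thesis by (metis nonzero_mult_div_cancel_right)
  qed
  have "-((w1-c)*(w2-c))/((w3-c)*(w4-c)) = -((c-w1)*(c-w2))/((c-w3)*(c-w4))" by (simp add: algebra_simps)
  also have "\<dots> = -((-N1*(p-c)*(q-c)/((D1-N1)*(c-u1)))*(-N2*(r-c)*(s-c)/((D2-N2)*(c-u2))))/(((p-c)*(r-c)*D3/((D3-N3)*(c-u3)))*((q-c)*(s-c)*D4/((D4-N4)*(c-u4))))"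
    by (simp only: w1 w2 w3 w4)
  also have "\<dots> = inverse(-((u1-c)*(u2-c))/((u3-c)*(u4-c))) * (1 + -N3/D3) * (1 + -N4/D4) / ((1 + inverse(-N1/D1)) * (1 + inverse(-N2/D2)))"
  proof -
    have a: "1 + -N3/D3 = (D3-N3)/D3" "1 + -N4/D4 = (D4-N4)/D4" using nz by (simp_all add: field_simps)
    have b: "1 + inverse(-N1/D1) = (-(D1-N1))/N1" "1 + inverse(-N2/D2) = (-(D2-N2))/N2" using nz by (simp_all add: field_simps)
    have c: "inverse(-((u1-c)*(u2-c))/((u3-c)*(u4-c))) = -((-(c-u3))*(-(c-u4)))/((-(c-u1))*(-(c-u2)))"
    proof -
      have i: "inverse(-A/B) = -B/A" for A B :: complex by (simp add: inverse_divide)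
      show ?thesis unfolding minus_diff_eq by (rule i)
    qed
    show ?thesis unfolding a b c
      by (rule alg2) (use nz pq rs in simp_all)
  qed
  finally show ?thesis .
qed

definition H :: "(int \<Rightarrow> int \<Rightarrow> complex) \<Rightarrow> int \<Rightarrow> int \<Rightarrow> complex" where
  "H u m n = - ((u (m+1) n - u m n) * (u (m-1) n - u m n)) / ((u m (n+1) - u m n) * (u m (n-1) - u m n))"

lemma inv_neg_div: "inverse(-A/B) = -B/(A::complex)" by (simp add: inverse_divide)

lemma Xb_H: "Xb u m n = (if black_face m n then H u m n else inverse (H u m n))"
  unfolding Xb_def H_def by (simp add: inv_neg_div)

lemma Xw_H: "Xw u m n = (if black_face m n then inverse (H u m n) else H u m n)"
  unfolding Xw_def Xb_H by (simp add: inverse_eq_divide)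

lemma bf_simps:
  "black_face (m+1) n \<longleftrightarrow> \<not> black_face m n"
  "black_face (m-1) n \<longleftrightarrow> \<not> black_face m n"
  "black_face m (n+1) \<longleftrightarrow> \<not> black_face m n"
  "black_face m (n-1) \<longleftrightarrow> \<not> black_face m n"
  by (simp_all add: black_face_def algebra_simps)

lemma quadk:
  fixes a b c d e w k D N :: complex
  assumes "\<forall>z. (a-z)*(b-z)*D - N*((d-z)*(e-z)) = k*(z-c)*(z-w)"
  shows "k = D - N"
proof -
  have e1: "(a-(c+1))*(b-(c+1))*D - N*((d-(c+1))*(e-(c+1))) = k*((c+1)-c)*((c+1)-w)" using assms by blast
  have e2: "(a-(c-1))*(b-(c-1))*D - N*((d-(c-1))*(e-(c-1))) = k*((c-1)-c)*((c-1)-w)" using assms by blast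
  have e3: "(a-c)*(b-c)*D - N*((d-c)*(e-c)) = k*(c-c)*(c-w)" using assms by blast
  have "2*k = k*((c+1)-c)*((c+1)-w) + k*((c-1)-c)*((c-1)-w) - 2*(k*(c-c)*(c-w))"
    by (simp add: algebra_simps)
  also have "\<dots> = ((a-(c+1))*(b-(c+1))*D - N*((d-(c+1))*(e-(c+1)))) + ((a-(c-1))*(b-(c-1))*D - N*((d-(c-1))*(e-(c-1)))) - 2*((a-c)*(b-c)*D - N*((d-c)*(e-c)))"
    by (simp only: e1 e2 e3)
  also have "\<dots> = 2*(D-N)" by (simp add: algebra_simps)
  finally have "2*k = 2*(D-N)" .
  thus ?thesis by (subst (asm) mult_left_cancel) auto
qed

lemma cm:
  assumes mv: "central_move u m n w" and nzh: "H u m n \<noteq> 0"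
    and ha: "u (m+1) n = a" and hb: "u (m-1) n = b" and hc: "u m n = c"
    and hd: "u m (n+1) = d" and he: "u m (n-1) = e"
    and hN: "N = (a-c)*(b-c)" and hD: "D = (d-c)*(e-c)"
  shows "D - N \<noteq> 0" "N \<noteq> 0" "D \<noteq> 0" "a \<noteq> c" "b \<noteq> c" "d \<noteq> c" "e \<noteq> c"
    "w \<noteq> a" "w \<noteq> b" "w \<noteq> d" "w \<noteq> e"
    "-N*(d-a)*(e-a) = (D-N)*(a-c)*(a-w)"
    "-N*(d-b)*(e-b) = (D-N)*(b-c)*(b-w)"
    "(a-d)*(b-d)*D = (D-N)*(d-c)*(d-w)"
    "(a-e)*(b-e)*D = (D-N)*(e-c)*(e-w)"
    "H u m n = -N/D"
proof -
  show Hd: "H u m n = -N/D" unfolding H_def ha hb hc hd he hN hD ..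
  have mr: "(a-w)*(b-w)/((d-w)*(e-w)) = N/D"
    using mv unfolding central_move_def move_ratio_def ha hb hc hd he hN hD by blast
  obtain k where k0: "k \<noteq> 0" and kz: "\<forall>z. (a-z)*(b-z)*D - N*((d-z)*(e-z)) = k*(z-c)*(z-w)"
    using mv unfolding central_move_def ha hb hc hd he hN[symmetric] hD[symmetric]
    by blast
  have kk: "k = D - N" by (rule quadk[OF kz])
  show "D - N \<noteq> 0" using k0 kk by simp
  have ND: "N/D \<noteq> 0" using nzh Hd by simp
  show "N \<noteq> 0" "D \<noteq> 0" using ND by auto
  thus "a \<noteq> c" "b \<noteq> c" "d \<noteq> c" "e \<noteq> c" using ND hN hD by auto
  have "(a-w)*(b-w)/((d-w)*(e-w)) \<noteq> 0" using mr ND by simp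
  thus "w \<noteq> a" "w \<noteq> b" "w \<noteq> d" "w \<noteq> e" by auto
  show "-N*(d-a)*(e-a) = (D-N)*(a-c)*(a-w)" using kz[rule_format, of a] kk by (simp add: mult.assoc)
  show "-N*(d-b)*(e-b) = (D-N)*(b-c)*(b-w)" using kz[rule_format, of b] kk by (simp add: mult.assoc)
  show "(a-d)*(b-d)*D = (D-N)*(d-c)*(d-w)" using kz[rule_format, of d] kk by (simp add: mult.assoc)
  show "(a-e)*(b-e)*D = (D-N)*(e-c)*(e-w)" using kz[rule_format, of e] kk by (simp add: mult.assoc)
qed

lemma moved_face:
  assumes mv: "central_move u m n (v m n)"
    and fx: "\<forall>m n. black_face m n \<noteq> s \<longrightarrow> v m n = u m n"
    and bf: "black_face m n = s"
  shows "H v m n = H u m n"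
proof -
  have f: "v (m+1) n = u (m+1) n" "v (m-1) n = u (m-1) n" "v m (n+1) = u m (n+1)" "v m (n-1) = u m (n-1)"
    using fx bf by (auto simp: bf_simps)
  have "move_ratio u m n (v m n) = move_ratio u m n (u m n)" using mv unfolding central_move_def by blast
  thus ?thesis unfolding H_def f move_ratio_def minus_divide_left[symmetric] by (rule arg_cong)
qed

lemma white_face:
  assumes nzH: "\<forall>m n. H u m n \<noteq> 0"
    and mv: "\<forall>m n. black_face m n = s \<longrightarrow> central_move u m n (v m n)"
    and fx: "\<forall>m n. black_face m n \<noteq> s \<longrightarrow> v m n = u m n"
    and W: "black_face m n \<noteq> s"
  shows "H v m n = inverse (H u m n) * (1 + H u m (n+1)) * (1 + H u m (n-1))
                 / ((1 + inverse (H u (m+1) n)) * (1 + inverse (H u (m-1) n)))"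
proof -
  define c where "c = u m n"
  define u1 where "u1 = u (m+1) n"
  define u2 where "u2 = u (m-1) n"
  define u3 where "u3 = u m (n+1)"
  define u4 where "u4 = u m (n-1)"
  define w1 where "w1 = v (m+1) n"
  define w2 where "w2 = v (m-1) n"
  define w3 where "w3 = v m (n+1)"
  define w4 where "w4 = v m (n-1)"
  define p where "p = u (m+1) (n+1)"
  define q where "q = u (m+1) (n-1)"
  define r where "r = u (m-1) (n+1)"
  define s' where "s' = u (m-1) (n-1)"
  define N1 where "N1 = (u (m+2) n - u1)*(c - u1)"
  define D1 where "D1 = (p - u1)*(q - u1)"
  define N2 where "N2 = (c - u2)*(u (m-2) n - u2)"
  define D2 where "D2 = (r - u2)*(s' - u2)"
  define N3 where "N3 = (p - u3)*(r - u3)"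
  define D3 where "D3 = (u m (n+2) - u3)*(c - u3)"
  define N4 where "N4 = (q - u4)*(s' - u4)"
  define D4 where "D4 = (c - u4)*(u m (n-2) - u4)"
  have bfs: "black_face (m+1) n = s" "black_face (m-1) n = s" "black_face m (n+1) = s" "black_face m (n-1) = s"
    using W by (auto simp: bf_simps)
  have vc: "v m n = c" using fx W c_def by simp
  have eqs1: "u (m+1+1) n = u (m+2) n" "u (m+1-1) n = c" "u (m+1) n = u1" "u (m+1) (n+1) = p" "u (m+1) (n-1) = q"
    by (auto simp: c_def u1_def u2_def u3_def u4_def p_def q_def r_def s'_def algebra_simps)
  note B1 = cm[of u "(m+1)" "n" w1 "u (m+2) n" c u1 p q N1 D1, OF mv[rule_format, OF bfs(1), folded w1_def] nzH[rule_format] eqs1 N1_def D1_def]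
  have B1': "D1 - N1 \<noteq> 0 \<and> N1 \<noteq> 0 \<and> D1 \<noteq> 0 \<and> c - u1 \<noteq> 0 \<and> c - w1 \<noteq> 0 \<and> -N1*(p-c)*(q-c) = (D1-N1)*(c-u1)*(c-w1) \<and> H u (m+1) n = -N1/D1"
    using B1(1,2,3,5,9,13,16) by auto
  have eqs2: "u (m-1+1) n = c" "u (m-1-1) n = u (m-2) n" "u (m-1) n = u2" "u (m-1) (n+1) = r" "u (m-1) (n-1) = s'"
    by (auto simp: c_def u1_def u2_def u3_def u4_def p_def q_def r_def s'_def algebra_simps)
  note B2 = cm[of u "(m-1)" "n" w2 c "u (m-2) n" u2 r s' N2 D2, OF mv[rule_format, OF bfs(2), folded w2_def] nzH[rule_format] eqs2 N2_def D2_def]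
  have B2': "D2 - N2 \<noteq> 0 \<and> N2 \<noteq> 0 \<and> D2 \<noteq> 0 \<and> c - u2 \<noteq> 0 \<and> c - w2 \<noteq> 0 \<and> -N2*(r-c)*(s'-c) = (D2-N2)*(c-u2)*(c-w2) \<and> H u (m-1) n = -N2/D2"
    using B2(1,2,3,4,8,12,16) by auto
  have eqs3: "u (m+1) (n+1) = p" "u (m-1) (n+1) = r" "u m (n+1) = u3" "u m (n+1+1) = u m (n+2)" "u m (n+1-1) = c"
    by (auto simp: c_def u1_def u2_def u3_def u4_def p_def q_def r_def s'_def algebra_simps)
  note B3 = cm[of u "m" "(n+1)" w3 p r u3 "u m (n+2)" c N3 D3, OF mv[rule_format, OF bfs(3), folded w3_def] nzH[rule_format] eqs3 N3_def D3_def]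
  have B3': "D3 - N3 \<noteq> 0 \<and> N3 \<noteq> 0 \<and> D3 \<noteq> 0 \<and> c - u3 \<noteq> 0 \<and> c - w3 \<noteq> 0 \<and> (p-c)*(r-c)*D3 = (D3-N3)*(c-u3)*(c-w3) \<and> H u m (n+1) = -N3/D3"
    using B3(1,2,3,7,11,15,16) by auto
  have eqs4: "u (m+1) (n-1) = q" "u (m-1) (n-1) = s'" "u m (n-1) = u4" "u m (n-1+1) = c" "u m (n-1-1) = u m (n-2)"
    by (auto simp: c_def u1_def u2_def u3_def u4_def p_def q_def r_def s'_def algebra_simps)
  note B4 = cm[of u "m" "(n-1)" w4 q s' u4 c "u m (n-2)" N4 D4, OF mv[rule_format, OF bfs(4), folded w4_def] nzH[rule_format] eqs4 N4_def D4_def]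
  have B4': "D4 - N4 \<noteq> 0 \<and> N4 \<noteq> 0 \<and> D4 \<noteq> 0 \<and> c - u4 \<noteq> 0 \<and> c - w4 \<noteq> 0 \<and> (q-c)*(s'-c)*D4 = (D4-N4)*(c-u4)*(c-w4) \<and> H u m (n-1) = -N4/D4"
    using B4(1,2,3,6,10,14,16) by auto
  have A: "-((w1-c)*(w2-c))/((w3-c)*(w4-c)) = inverse(-((u1-c)*(u2-c))/((u3-c)*(u4-c))) * (1 + -N3/D3) * (1 + -N4/D4) / ((1 + inverse(-N1/D1)) * (1 + inverse(-N2/D2)))"
    apply (rule alg)
    using B1' B2' B3' B4' by auto
  have Hv: "H v m n = -((w1-c)*(w2-c))/((w3-c)*(w4-c))"
    unfolding H_def vc w1_def w2_def w3_def w4_def ..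
  have Hu: "H u m n = -((u1-c)*(u2-c))/((u3-c)*(u4-c))"
    unfolding H_def c_def u1_def u2_def u3_def u4_def ..
  have h1: "H u (m+1) n = -N1/D1" using B1' by blast
  have h2: "H u (m-1) n = -N2/D2" using B2' by blast
  have h3: "H u m (n+1) = -N3/D3" using B3' by blast
  have h4: "H u m (n-1) = -N4/D4" using B4' by blast
  show ?thesis unfolding Hv Hu h1 h2 h3 h4 by (rule A)
qed

lemma generic:
  assumes nzH: "\<forall>m n. H u m n \<noteq> 0"
    and mv: "\<forall>m n. black_face m n = s \<longrightarrow> central_move u m n (v m n)"
    and fx: "\<forall>m n. black_face m n \<noteq> s \<longrightarrow> v m n = u m n"
    and G: "\<And>f m n. G f m n = (if black_face m n = s then H f m n else inverse (H f m n))"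
  shows "\<forall>m n. inverse (G v m n) =
           (if black_face m n = s then inverse (G u m n)
            else G u m n * (1 + G u m (n+1)) * (1 + G u m (n-1))
                 / ((1 + inverse (G u (m+1) n)) * (1 + inverse (G u (m-1) n))))"
    and "(\<forall>m n. 0 < G u m n) \<longleftrightarrow> (\<forall>m n. 0 < inverse (G v m n))"
proof -
  show F: "\<forall>m n. inverse (G v m n) =
           (if black_face m n = s then inverse (G u m n)
            else G u m n * (1 + G u m (n+1)) * (1 + G u m (n-1))
                 / ((1 + inverse (G u (m+1) n)) * (1 + inverse (G u (m-1) n))))"
  proof (intro allI)
    fix m n
    show "inverse (G v m n) =
           (if black_face m n = s then inverse (G u m n)
            else G u m n * (1 + G u m (n+1)) * (1 + G u m (n-1))
                 / ((1 + inverse (G u (m+1) n)) * (1 + inverse (G u (m-1) n))))"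
    proof (cases "black_face m n = s")
      case True
      then show ?thesis using moved_face[OF mv[rule_format, OF True] fx True] G by simp
    next
      case False
      have bfs: "black_face (m+1) n = s" "black_face (m-1) n = s" "black_face m (n+1) = s" "black_face m (n-1) = s"
        using False by (auto simp: bf_simps)
      show ?thesis using white_face[OF nzH mv fx False] False bfs G by simp
    qed
  qed
  show "(\<forall>m n. 0 < G u m n) \<longleftrightarrow> (\<forall>m n. 0 < inverse (G v m n))"
  proof
    assume P: "\<forall>m n. 0 < G u m n"
    show "\<forall>m n. 0 < inverse (G v m n)"
    proof (intro allI)
      fix m n
      show "0 < inverse (G v m n)"
        unfolding F[rule_format, of m n] using P
        by (auto intro!: cpos_mult cpos_div cpos_add1 cpos_inv)
    qed
  next
    assume P: "\<forall>m n. 0 < inverse (G v m n)"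
    have B: "0 < G u m n" if "black_face m n = s" for m n
    proof -
      have "inverse (G v m n) = inverse (G u m n)" using F that by simp
      hence e: "G u m n = inverse (inverse (G v m n))" by (metis inverse_inverse_eq)
      have "0 < inverse (inverse (G v m n))" by (rule cpos_inv) (use P in blast)
      thus ?thesis unfolding e .
    qed
    show "\<forall>m n. 0 < G u m n"
    proof (intro allI)
      fix m n
      show "0 < G u m n"
      proof (cases "black_face m n = s")
        case True then show ?thesis by (rule B)
      next
        case False
        have bfs: "black_face (m+1) n = s" "black_face (m-1) n = s" "black_face m (n+1) = s" "black_face m (n-1) = s"
          using False by (auto simp: bf_simps)
        define A where "A = (1 + G u m (n+1)) * (1 + G u m (n-1))"
        define C where "C = (1 + inverse (G u (m+1) n)) * (1 + inverse (G u (m-1) n))"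
        have g1: "0 < G u (m+1) n" "0 < G u (m-1) n" "0 < G u m (n+1)" "0 < G u m (n-1)"
          using B bfs by blast+
        have Ap: "0 < A" unfolding A_def by (intro cpos_mult cpos_add1 g1)
        have Cp: "0 < C" unfolding C_def by (intro cpos_mult cpos_add1 cpos_inv g1)
        have An: "A \<noteq> 0" and Cn: "C \<noteq> 0" using Ap Cp by auto
        have eq: "inverse (G v m n) = G u m n * A / C"
          using F[rule_format, of m n] False unfolding A_def C_def by (simp add: mult.assoc)
        have e2: "G u m n = inverse (G v m n) * C / A"
          using An Cn unfolding eq by (simp add: field_simps)
        have "0 < inverse (G v m n) * C / A"
          by (intro cpos_div cpos_mult Ap Cp) (use P in blast)
        thus ?thesis unfolding e2 .
      qed
    qed
  qed
qed

theorem mainTheorem12: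
  fixes u :: "int \<Rightarrow> int \<Rightarrow> complex"
  assumes cp: "circle_pattern u"
    and nz: "\<forall>m n. Xb u m n \<noteq> 0"
  shows
    "(\<forall>v. black_mutation u v \<longrightarrow>
        (\<forall>m n. Xw v m n =
           (if black_face m n then inverse (Xb u m n)
            else Xb u m n * (1 + Xb u m (n+1)) * (1 + Xb u m (n-1))
                 / ((1 + inverse (Xb u (m+1) n)) * (1 + inverse (Xb u (m-1) n))))) \<and>
        ((\<forall>m n. 0 < Xb u m n) \<longleftrightarrow> (\<forall>m n. 0 < Xw v m n)))
   \<and>
    (\<forall>v. white_mutation u v \<longrightarrow>
        (\<forall>m n. Xb v m n =
           (if \<not> black_face m n then inverse (Xw u m n)
            else Xw u m n * (1 + Xw u m (n+1)) * (1 + Xw u m (n-1))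
                 / ((1 + inverse (Xw u (m+1) n)) * (1 + inverse (Xw u (m-1) n))))) \<and>
        ((\<forall>m n. 0 < Xw u m n) \<longleftrightarrow> (\<forall>m n. 0 < Xb v m n)))"
proof -
  have nzH: "\<forall>m n. H u m n \<noteq> 0" using nz by (metis Xb_H inverse_zero)
  have XbG: "\<And>f m n. Xb f m n = (if black_face m n = True then H f m n else inverse (H f m n))"
    by (simp add: Xb_H)
  have XwG: "\<And>f m n. Xw f m n = (if black_face m n = False then H f m n else inverse (H f m n))"
    by (simp add: Xw_H)
  have XwXb: "\<And>f m n. Xw f m n = inverse (Xb f m n)" by (simp add: Xw_def inverse_eq_divide)
  have XbXw: "\<And>f m n. Xb f m n = inverse (Xw f m n)" by (simp add: XwXb)
  show ?thesis
  proof (intro conjI allI impI)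
    fix v m n assume bm: "black_mutation u v"
    have mv: "\<forall>m n. black_face m n = True \<longrightarrow> central_move u m n (v m n)"
      and fx: "\<forall>m n. black_face m n \<noteq> True \<longrightarrow> v m n = u m n"
      using bm unfolding black_mutation_def by auto
    note g = generic[OF nzH mv fx XbG]
    show "Xw v m n =
           (if black_face m n then inverse (Xb u m n)
            else Xb u m n * (1 + Xb u m (n+1)) * (1 + Xb u m (n-1))
                 / ((1 + inverse (Xb u (m+1) n)) * (1 + inverse (Xb u (m-1) n))))"
      using g(1) unfolding XwXb by simp
  next
    fix v assume bm: "black_mutation u v"
    have mv: "\<forall>m n. black_face m n = True \<longrightarrow> central_move u m n (v m n)"
      and fx: "\<forall>m n. black_face m n \<noteq> True \<longrightarrow> v m n = u m n"
      using bm unfolding black_mutation_def by auto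
    note g = generic[OF nzH mv fx XbG]
    show "(\<forall>m n. 0 < Xb u m n) \<longleftrightarrow> (\<forall>m n. 0 < Xw v m n)"
      using g(2) unfolding XwXb .
  next
    fix v m n assume wm: "white_mutation u v"
    have mv: "\<forall>m n. black_face m n = False \<longrightarrow> central_move u m n (v m n)"
      and fx: "\<forall>m n. black_face m n \<noteq> False \<longrightarrow> v m n = u m n"
      using wm unfolding white_mutation_def by auto
    note g = generic[OF nzH mv fx XwG]
    show "Xb v m n =
           (if \<not> black_face m n then inverse (Xw u m n)
            else Xw u m n * (1 + Xw u m (n+1)) * (1 + Xw u m (n-1))
                 / ((1 + inverse (Xw u (m+1) n)) * (1 + inverse (Xw u (m-1) n))))"
      using g(1) unfolding XbXw by simp
  next
    fix v assume wm: "white_mutation u v"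
    have mv: "\<forall>m n. black_face m n = False \<longrightarrow> central_move u m n (v m n)"
      and fx: "\<forall>m n. black_face m n \<noteq> False \<longrightarrow> v m n = u m n"
      using wm unfolding white_mutation_def by auto
    note g = generic[OF nzH mv fx XwG]
    show "(\<forall>m n. 0 < Xw u m n) \<longleftrightarrow> (\<forall>m n. 0 < Xb v m n)"
      using g(2) unfolding XbXw .
  qed
qed

end
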